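(* Let $p\in Pr$ and let $\mathcal{T}$ be a set of $\mathrm{HL}$-types such that every $T\in\mathcal{T}$ has no skeleton subtypes and $p$ is lonely in $T$. If $H$ is a graph all of whose edges are labeled by elements of $\mathcal{T}\cup\{p\}$ and $\mathrm{HL}\vdash H\to p$, then $H=p^\bullet$.
   Context: Hypergraphs: given labels $C$ with $type:C\to\mathbb{N}$, a graph is $G=\langle V,E,att,lab,ext\rangle$ with finite $V,E$, $att:E\to V^\circledast$ (strings of distinct nodes), $lab:E\to C$ with $type(lab(e))=|att(e)|$, $ext\in V^\circledast$; $type(G)=|ext|$; isomorphic graphs identified. Handle $a^\bullet$: nodes $v_1..v_n$, one edge labeled $a$ with $att=v_1\dots v_n$, $ext=v_1\dots v_n$. Replacement $G[e/H]$: remove $e$, insert a disjoint copy of $H$, fuse $i$-th external node of $H$ with $i$-th attachment node of $e$; simultaneous replacement; relabeling $G[e:=a]$. $\mathrm{HL}$: primitive types $Pr$ with $type:Pr\to\mathbb{N}$ (infinitely many of each arity); symbol $\$$ of any arity. Types: primitives; $N\div D$ where $D$ has exactly one edge $d_0$ labeled $\$$, others labeled by types, $type(N)=type(D)$, $type(N\div D)=type_D(d_0)$; $\times(M)$ for a type-labeled graph $M$, $type(\times(M))=type(M)$. Subtypes of a type are the occurrences of types in its inductive construction (the type itself, and recursively subtypes of $N$ and of edge labels of $D$ for $N\div D$, and of edge labels of $M$ for $\times(M)$). Graph sequent $H\to A$ with $type(H)=type(A)$. Axioms $p^\bullet\to p$. Rules: $(\div\to)$: for $N\div D$ with $E_D=\{d_0,\dots,d_k\}$,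 $e\in E_H$ labeled $N$: from $H\to A$, $H_i\to lab(d_i)$ infer $H[e/D][d_0:=N\div D][d_1/H_1,\dots,d_k/H_k]\to A$; $(\to\div)$: from $D[d_0/F]\to N$ infer $F\to N\div D$; $(\times\to)$: if $e\in E_G$ is labeled $\times(F)$, from $G[e/F]\to A$ infer $G\to A$; $(\to\times)$: with $E_M=\{m_1,\dots,m_l\}$, from $H_i\to lab(m_i)$ infer $M[m_1/H_1,\dots,m_l/H_l]\to\times(M)$. Top occurrence: a subtype occurrence $B$ is a top occurrence within $A$ if $A=B$; or $A=\times(M)$ and $B$ is a top occurrence within $lab(e_0)$ for some $e_0\in E_M$; or $A=N\div D$ and $B$ is a top occurrence within $N$. A primitive $p$ is lonely in a type $A$ if for each top occurrence of $p$ within $A$ there is a subtype $\times(M)$ of $A$ with $|E_M|\ge2$ and some $e_0\in E_M$ whose label $lab(e_0)=p$ is that top occurrence. A type is skeleton if it equals $\times(M)$ with $E_M=\emptyset$ and $|ext_M|=|V_M|$. *)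

theory Defs
  imports Main "HOL-Library.Nat_Bijection"
begin

text \<open>A concrete hypergraph with nodes and edges drawn from nat.  Graphs are only
  meaningful up to isomorphism (see giso); labels outside the edge set are irrelevant.\<close>

datatype 'l hgraph = HG (nodes: "nat set") (edges: "nat set") (att: "nat \<Rightarrow> nat list")
                        (lab: "nat \<Rightarrow> 'l") (ext: "nat list")

definition wfg :: "'l hgraph \<Rightarrow> bool" where
  "wfg G \<longleftrightarrow> finite (nodes G) \<and> finite (edges G)
     \<and> (\<forall>e\<in>edges G. distinct (att G e) \<and> set (att G e) \<subseteq> nodes G)
     \<and> distinct (ext G) \<and> set (ext G) \<subseteq> nodes G"

definition giso :: "('a \<Rightarrow> 'b \<Rightarrow> bool) \<Rightarrow> 'a hgraph \<Rightarrow> 'b hgraph \<Rightarrow> bool" where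
  "giso R G G' \<longleftrightarrow> (\<exists>f g. bij_betw f (nodes G) (nodes G') \<and> bij_betw g (edges G) (edges G')
     \<and> (\<forall>e\<in>edges G. att G' (g e) = map f (att G e) \<and> R (lab G e) (lab G' (g e)))
     \<and> ext G' = map f (ext G))"

lemma giso_mono [mono]: "(\<And>x y. R x y \<longrightarrow> S x y) \<Longrightarrow> giso R G G' \<longrightarrow> giso S G G'"
  unfolding giso_def by blast

text \<open>Fresh-copy encoding of nodes/edges used by replacement: index 0 = the host graph,
  index Suc e = the copy of the graph inserted in place of edge e.\<close>
definition cp :: "nat \<Rightarrow> nat \<Rightarrow> nat" where "cp i x = prod_encode (i, x)"

text \<open>Simultaneous replacement G[e/sigma(e) for all e with sigma e \<noteq> None].\<close>
definition repl :: "'l hgraph \<Rightarrow> (nat \<Rightarrow> 'l hgraph option) \<Rightarrow> 'l hgraph" where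
  "repl G \<sigma> = (let
     R = {e \<in> edges G. \<sigma> e \<noteq> None};
     vm = (\<lambda>e v. let H = the (\<sigma> e) in
             if v \<in> set (ext H)
             then cp 0 (att G e ! (THE i. i < length (ext H) \<and> ext H ! i = v))
             else cp (Suc e) v)
   in HG (cp 0 ` nodes G \<union> (\<Union>e\<in>R. vm e ` nodes (the (\<sigma> e))))
         (cp 0 ` (edges G - R) \<union> (\<Union>e\<in>R. cp (Suc e) ` edges (the (\<sigma> e))))
         (\<lambda>x. case prod_decode x of (0, y) \<Rightarrow> map (cp 0) (att G y)
                | (Suc e, y) \<Rightarrow> map (vm e) (att (the (\<sigma> e)) y))
         (\<lambda>x. case prod_decode x of (0, y) \<Rightarrow> lab G y
                | (Suc e, y) \<Rightarrow> lab (the (\<sigma> e)) y)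
         (map (cp 0) (ext G)))"

definition relab :: "'l hgraph \<Rightarrow> nat \<Rightarrow> 'l \<Rightarrow> 'l hgraph" where
  "relab G e a = HG (nodes G) (edges G) (att G) ((lab G)(e := a)) (ext G)"

text \<open>Prim a k: primitive type named a of arity k (infinitely many of each arity).
  In Div N D, the graph D is labelled by tp option, where None stands for the dollar symbol.\<close>
datatype tp = Prim nat nat | Div tp "tp option hgraph" | Times "tp hgraph"

definition tp_type :: "tp \<Rightarrow> nat" where
  "tp_type A = (case A of Prim a k \<Rightarrow> k
     | Div N D \<Rightarrow> length (att D (THE d. d \<in> edges D \<and> lab D d = None))
     | Times M \<Rightarrow> length (ext M))"

inductive wf_tp :: "tp \<Rightarrow> bool" where
  "wf_tp (Prim a k)"
| "wfg D \<Longrightarrow> (\<exists>!d. d \<in> edges D \<and> lab D d = None)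
   \<Longrightarrow> (\<forall>d\<in>edges D. \<forall>t. lab D d = Some t \<longrightarrow> wf_tp t \<and> tp_type t = length (att D d))
   \<Longrightarrow> wf_tp N \<Longrightarrow> tp_type N = length (ext D) \<Longrightarrow> wf_tp (Div N D)"
| "wfg M \<Longrightarrow> (\<forall>e\<in>edges M. wf_tp (lab M e) \<and> tp_type (lab M e) = length (att M e))
   \<Longrightarrow> wf_tp (Times M)"

definition wfg_t :: "tp hgraph \<Rightarrow> bool" where
  "wfg_t H \<longleftrightarrow> wfg H \<and> (\<forall>e\<in>edges H. wf_tp (lab H e) \<and> tp_type (lab H e) = length (att H e))"

definition seq_ok :: "tp hgraph \<Rightarrow> tp \<Rightarrow> bool" where
  "seq_ok H A \<longleftrightarrow> wfg_t H \<and> wf_tp A \<and> length (ext H) = tp_type A"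

inductive teq :: "tp \<Rightarrow> tp \<Rightarrow> bool" where
  "teq (Prim a k) (Prim a k)"
| "teq N N' \<Longrightarrow> giso (\<lambda>x y. (x = None \<and> y = None) \<or> (\<exists>s t. x = Some s \<and> y = Some t \<and> teq s t)) D D'
   \<Longrightarrow> teq (Div N D) (Div N' D')"
| "giso teq M M' \<Longrightarrow> teq (Times M) (Times M')"

definition handle :: "tp \<Rightarrow> tp hgraph" where
  "handle A = HG {0..<tp_type A} {0} (\<lambda>_. [0..<tp_type A]) (\<lambda>_. A) [0..<tp_type A]"

inductive HL :: "tp hgraph \<Rightarrow> tp \<Rightarrow> bool" where
  iso: "HL H A \<Longrightarrow> giso teq H H' \<Longrightarrow> teq A A' \<Longrightarrow> seq_ok H' A' \<Longrightarrow> HL H' A'"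
| ax: "HL (handle (Prim a k)) (Prim a k)"
| div_l: "HL H A \<Longrightarrow> e \<in> edges H \<Longrightarrow> lab H e = N \<Longrightarrow> d0 \<in> edges D \<Longrightarrow> lab D d0 = None
   \<Longrightarrow> (\<forall>d \<in> edges D - {d0}. HL (Hs d) (the (lab D d)))
   \<Longrightarrow> G = repl (relab (repl H (\<lambda>x. if x = e then Some (map_hgraph the D) else None))
                         (cp (Suc e) d0) (Div N D))
              (\<lambda>x. if x \<in> cp (Suc e) ` (edges D - {d0}) then Some (Hs (snd (prod_decode x))) else None)
   \<Longrightarrow> seq_ok G A \<Longrightarrow> HL G A"
| div_r: "HL (repl (map_hgraph the D) (\<lambda>x. if x = d0 then Some F else None)) N
   \<Longrightarrow> d0 \<in> edges D \<Longrightarrow> lab D d0 = None \<Longrightarrow> seq_ok F (Div N D) \<Longrightarrow> HL F (Div N D)"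
| times_l: "HL (repl G (\<lambda>x. if x = e then Some F else None)) A \<Longrightarrow> e \<in> edges G
   \<Longrightarrow> lab G e = Times F \<Longrightarrow> seq_ok G A \<Longrightarrow> HL G A"
| times_r: "(\<forall>m \<in> edges M. HL (Hs m) (lab M m))
   \<Longrightarrow> G = repl M (\<lambda>m. if m \<in> edges M then Some (Hs m) else None)
   \<Longrightarrow> seq_ok G (Times M) \<Longrightarrow> HL G (Times M)"

text \<open>Positions of subtype occurrences: SNum goes to the numerator N of N div D,
  SDen d to the label of edge d of D, SMul e to the label of edge e of M in times(M).\<close>
datatype step = SNum | SDen nat | SMul nat

inductive occ :: "tp \<Rightarrow> step list \<Rightarrow> tp \<Rightarrow> bool" where
  "occ A [] A"
| "occ N ps B \<Longrightarrow> occ (Div N D) (SNum # ps) B"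
| "d \<in> edges D \<Longrightarrow> lab D d = Some L \<Longrightarrow> occ L ps B \<Longrightarrow> occ (Div N D) (SDen d # ps) B"
| "e \<in> edges M \<Longrightarrow> occ (lab M e) ps B \<Longrightarrow> occ (Times M) (SMul e # ps) B"

definition top_occ :: "tp \<Rightarrow> step list \<Rightarrow> tp \<Rightarrow> bool" where
  "top_occ A ps B \<longleftrightarrow> occ A ps B \<and> (\<forall>d. SDen d \<notin> set ps)"

definition lonely :: "tp \<Rightarrow> tp \<Rightarrow> bool" where
  "lonely p A \<longleftrightarrow> (\<forall>ps. top_occ A ps p \<longrightarrow>
     (\<exists>ps' e M. ps = ps' @ [SMul e] \<and> occ A ps' (Times M) \<and> 2 \<le> card (edges M)
                \<and> e \<in> edges M \<and> lab M e = p))"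

definition skeleton :: "tp \<Rightarrow> bool" where
  "skeleton B \<longleftrightarrow> (\<exists>M. B = Times M \<and> edges M = {} \<and> length (ext M) = card (nodes M))"

definition subtype :: "tp \<Rightarrow> tp \<Rightarrow> bool" where
  "subtype B A \<longleftrightarrow> (\<exists>ps. occ A ps B)"

end

theory Submission
  imports Defs
begin

lemma giso_id: "(\<And>e. e \<in> edges G \<Longrightarrow> R (lab G e) (lab G e)) \<Longrightarrow> giso R G G"
  unfolding giso_def
  by (rule exI[of _ id], rule exI[of _ id]) (auto simp: bij_betw_id)

lemma giso_comp:
  assumes "giso R G1 G2" "giso S G2 G3" "\<And>x y z. R x y \<Longrightarrow> S y z \<Longrightarrow> T x z"
  shows "giso T G1 G3"
proof -
  obtain f g where fg: "bij_betw f (nodes G1) (nodes G2)" "bij_betw g (edges G1) (edges G2)"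
    "\<forall>e\<in>edges G1. att G2 (g e) = map f (att G1 e) \<and> R (lab G1 e) (lab G2 (g e))"
    "ext G2 = map f (ext G1)" using assms(1) unfolding giso_def by blast
  obtain f' g' where fg': "bij_betw f' (nodes G2) (nodes G3)" "bij_betw g' (edges G2) (edges G3)"
    "\<forall>e\<in>edges G2. att G3 (g' e) = map f' (att G2 e) \<and> S (lab G2 e) (lab G3 (g' e))"
    "ext G3 = map f' (ext G2)" using assms(2) unfolding giso_def by blast
  have ge: "\<And>e. e \<in> edges G1 \<Longrightarrow> g e \<in> edges G2" using fg(2) bij_betwE by blast
  show ?thesis unfolding giso_def
    apply (rule exI[of _ "f' \<circ> f"], rule exI[of _ "g' \<circ> g"])
    using fg fg' ge assms(3) by (auto intro: bij_betw_trans)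
qed

lemma teq_refl: "teq A A"
proof (induction A)
  case (Prim x1 x2)
  then show ?case by (rule teq.intros)
next
  case (Div x1 x2)
  show ?case
    apply (rule teq.intros(2)[OF Div(1)])
    apply (rule giso_id)
    using Div(2) by (metis hgraph.set_sel option.exhaust option.set_intros rangeI)
next
  case (Times x)
  show ?case
    apply (rule teq.intros(3))
    apply (rule giso_id)
    using Times by (meson hgraph.set_sel rangeI)
qed

lemma teq_trans: "teq A B \<Longrightarrow> teq B C \<Longrightarrow> teq A C"
proof (induction A B arbitrary: C rule: teq.induct)
  case (1 a k)
  then show ?case by simp
next
  case (2 N N' D D')
  from 2(4) obtain N'' D'' where C: "C = Div N'' D''" "teq N' N''"
    "giso (\<lambda>x y. x = None \<and> y = None \<or> (\<exists>s t. x = Some s \<and> y = Some t \<and> teq s t)) D' D''"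
    by (cases rule: teq.cases) auto
  show ?case unfolding C(1)
    apply (rule teq.intros(2))
    apply (rule 2(2)[OF C(2)])
    apply (rule giso_comp[OF 2(3) C(3)])
    by auto
next
  case (3 M M')
  from 3(2) obtain M'' where C: "C = Times M''" "giso teq M' M''"
    by (cases rule: teq.cases) auto
  show ?case unfolding C(1)
    apply (rule teq.intros(3))
    apply (rule giso_comp[OF 3(1) C(2)])
    by auto
qed

lemma teq_prim1: "teq (Prim a k) Y \<Longrightarrow> Y = Prim a k"
  by (cases rule: teq.cases) auto
lemma teq_prim2: "teq Y (Prim a k) \<Longrightarrow> Y = Prim a k"
  by (cases rule: teq.cases) auto

lemma cp_inj[simp]: "cp i x = cp j y \<longleftrightarrow> i = j \<and> x = y"
  unfolding cp_def by (simp add: prod_encode_eq)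
lemma cp_dec[simp]: "prod_decode (cp i x) = (i, x)"
  unfolding cp_def by simp

lemma repl_ext[simp]: "ext (repl G \<sigma>) = map (cp 0) (ext G)"
  unfolding repl_def Let_def by simp

lemma repl_keep:
  assumes "x \<in> edges G" "\<sigma> x = None"
  shows "cp 0 x \<in> edges (repl G \<sigma>) \<and> lab (repl G \<sigma>) (cp 0 x) = lab G x"
  using assms unfolding repl_def Let_def by auto

lemma repl_new:
  assumes "x \<in> edges G" "\<sigma> x = Some H" "y \<in> edges H"
  shows "cp (Suc x) y \<in> edges (repl G \<sigma>) \<and> lab (repl G \<sigma>) (cp (Suc x) y) = lab H y"
  using assms unfolding repl_def Let_def by auto

lemma repl_edges:
  assumes "z \<in> edges (repl G \<sigma>)"
  shows "(\<exists>x. z = cp 0 x \<and> x \<in> edges G \<and> \<sigma> x = None \<and> lab (repl G \<sigma>) z = lab G x)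
       \<or> (\<exists>x H y. z = cp (Suc x) y \<and> x \<in> edges G \<and> \<sigma> x = Some H \<and> y \<in> edges H
              \<and> lab (repl G \<sigma>) z = lab H y)"
  using assms unfolding repl_def Let_def by auto

lemma repl_node:
  assumes "x \<in> edges G" "\<sigma> x = Some H" "v \<in> nodes H" "v \<notin> set (ext H)"
  shows "cp (Suc x) v \<in> nodes (repl G \<sigma>)"
  unfolding repl_def Let_def hgraph.sel
  apply (rule UnI2)
  apply (rule UN_I[of x])
  using assms apply simp
  apply (rule image_eqI[of _ _ v])
  using assms by simp_all

definition good' :: "nat \<Rightarrow> nat \<Rightarrow> tp \<Rightarrow> bool" where
  "good' a k Y \<longleftrightarrow> Y = Prim a k \<or> ((\<forall>B. subtype B Y \<longrightarrow> \<not> skeleton B) \<and> lonely (Prim a k) Y)"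

definition CC :: "nat \<Rightarrow> nat \<Rightarrow> tp \<Rightarrow> bool" where
  "CC a k X \<longleftrightarrow> (\<exists>Y. teq X Y \<and> good' a k Y)"

definition is_handle :: "nat \<Rightarrow> nat \<Rightarrow> tp hgraph \<Rightarrow> bool" where
  "is_handle a k H \<longleftrightarrow> (\<exists>x. edges H = {x} \<and> lab H x = Prim a k \<and> att H x = ext H
     \<and> nodes H = set (ext H) \<and> length (ext H) = k \<and> distinct (ext H))"

lemma L2:
  assumes "CC a k (Div N D)"
  shows "CC a k N \<and> N \<noteq> Prim a k"
proof -
  obtain Y where Y: "teq (Div N D) Y" "good' a k Y" using assms unfolding CC_def by blast
  from Y(1) obtain N' D' where Y': "Y = Div N' D'" "teq N N'"
    by (cases rule: teq.cases) auto
  have ns: "\<forall>B. subtype B Y \<longrightarrow> \<not> skeleton B" and lo: "lonely (Prim a k) Y"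
    using Y(2) Y'(1) unfolding good'_def by auto
  have "good' a k N'"
  proof -
    have "\<forall>B. subtype B N' \<longrightarrow> \<not> skeleton B"
      using ns unfolding Y'(1) subtype_def by (meson occ.intros(2))
    moreover have "lonely (Prim a k) N'"
      unfolding lonely_def
    proof (intro allI impI)
      fix ps assume t: "top_occ N' ps (Prim a k)"
      then have "top_occ Y (SNum # ps) (Prim a k)"
        unfolding top_occ_def Y'(1) by (auto intro: occ.intros)
      then obtain ps' e M where ps': "SNum # ps = ps' @ [SMul e]" "occ Y ps' (Times M)"
        "2 \<le> card (edges M)" "e \<in> edges M" "lab M e = Prim a k"
        using lo unfolding lonely_def by blast
      then obtain ps'' where "ps' = SNum # ps''" by (cases ps') auto
      with ps' have "ps = ps'' @ [SMul e]" "occ N' ps'' (Times M)"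
        unfolding Y'(1) by (auto elim: occ.cases)
      with ps' show "\<exists>ps' e M. ps = ps' @ [SMul e] \<and> occ N' ps' (Times M) \<and> 2 \<le> card (edges M)
                \<and> e \<in> edges M \<and> lab M e = Prim a k" by blast
    qed
    ultimately show ?thesis unfolding good'_def by blast
  qed
  then have "CC a k N" using Y' unfolding CC_def by blast
  moreover have "N \<noteq> Prim a k"
  proof
    assume "N = Prim a k"
    then have "N' = Prim a k" using Y'(2) teq_prim1 by blast
    then have "top_occ Y [SNum] (Prim a k)" unfolding top_occ_def Y'(1)
      by (auto intro: occ.intros)
    then show False using lo unfolding lonely_def by auto
  qed
  ultimately show ?thesis by blast
qed

lemma L3:
  assumes "CC a k (Times F)"
  shows "(\<forall>f\<in>edges F. CC a k (lab F f))
    \<and> (wfg F \<longrightarrow> edges F = {} \<longrightarrow> (\<exists>v\<in>nodes F. v \<notin> set (ext F)))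
    \<and> (\<forall>f0. edges F = {f0} \<longrightarrow> lab F f0 \<noteq> Prim a k)"
proof -
  obtain Y where Y: "teq (Times F) Y" "good' a k Y" using assms unfolding CC_def by blast
  from Y(1) obtain F' where Y': "Y = Times F'" "giso teq F F'"
    by (cases rule: teq.cases) auto
  have ns: "\<forall>B. subtype B Y \<longrightarrow> \<not> skeleton B" and lo: "lonely (Prim a k) Y"
    using Y(2) Y'(1) unfolding good'_def by auto
  obtain f g where fg: "bij_betw f (nodes F) (nodes F')" "bij_betw g (edges F) (edges F')"
    "\<forall>e\<in>edges F. att F' (g e) = map f (att F e) \<and> teq (lab F e) (lab F' (g e))"
    "ext F' = map f (ext F)" using Y'(2) unfolding giso_def by blast
  have A: "\<forall>f\<in>edges F. CC a k (lab F f)"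
  proof
    fix x assume x: "x \<in> edges F"
    let ?x' = "g x"
    have x': "?x' \<in> edges F'" using x fg(2) bij_betwE by blast
    have "good' a k (lab F' ?x')"
    proof (cases "lab F' ?x' = Prim a k")
      case True then show ?thesis unfolding good'_def by blast
    next
      case False
      have "\<forall>B. subtype B (lab F' ?x') \<longrightarrow> \<not> skeleton B"
        using ns x' unfolding Y'(1) subtype_def by (meson occ.intros(4))
      moreover have "lonely (Prim a k) (lab F' ?x')"
        unfolding lonely_def
      proof (intro allI impI)
        fix ps assume t: "top_occ (lab F' ?x') ps (Prim a k)"
        then have "top_occ Y (SMul ?x' # ps) (Prim a k)"
          unfolding top_occ_def Y'(1) using x' by (auto intro: occ.intros)
        then obtain ps' e M where ps': "SMul ?x' # ps = ps' @ [SMul e]" "occ Y ps' (Times M)"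
          "2 \<le> card (edges M)" "e \<in> edges M" "lab M e = Prim a k"
          using lo unfolding lonely_def by blast
        show "\<exists>ps' e M. ps = ps' @ [SMul e] \<and> occ (lab F' ?x') ps' (Times M) \<and> 2 \<le> card (edges M)
                \<and> e \<in> edges M \<and> lab M e = Prim a k"
        proof (cases ps')
          case Nil
          then have "ps = []" using ps'(1) by simp
          then have "lab F' ?x' = Prim a k" using t unfolding top_occ_def
            by (auto elim: occ.cases)
          then show ?thesis using False by blast
        next
          case (Cons s ps'')
          with ps' have "ps = ps'' @ [SMul e]" "occ (lab F' ?x') ps'' (Times M)"
            unfolding Y'(1) by (auto elim: occ.cases)
          with ps' show ?thesis by blast
        qed
      qed
      ultimately show ?thesis unfolding good'_def by blast
    qed
    then show "CC a k (lab F x)" using fg(3) x unfolding CC_def by blast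
  qed
  have B: "wfg F \<longrightarrow> edges F = {} \<longrightarrow> (\<exists>v\<in>nodes F. v \<notin> set (ext F))"
  proof (intro impI)
    assume w: "wfg F" and e: "edges F = {}"
    have "edges F' = {}" using fg(2) e by (simp add: bij_betw_def)
    moreover have "\<not> skeleton Y" using ns unfolding subtype_def by (meson occ.intros(1))
    ultimately have "length (ext F') \<noteq> card (nodes F')" unfolding Y'(1) skeleton_def by blast
    then have ne: "length (ext F) \<noteq> card (nodes F)" using fg(4) bij_betw_same_card[OF fg(1)] by simp
    have "card (set (ext F)) = length (ext F)" using w unfolding wfg_def by (simp add: distinct_card)
    moreover have "set (ext F) \<subseteq> nodes F" "finite (nodes F)" using w unfolding wfg_def by auto
    ultimately show "\<exists>v\<in>nodes F. v \<notin> set (ext F)" using ne by (metis subsetI subset_antisym)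
  qed
  have C: "\<forall>f0. edges F = {f0} \<longrightarrow> lab F f0 \<noteq> Prim a k"
  proof (intro allI impI notI)
    fix f0 assume e: "edges F = {f0}" and l: "lab F f0 = Prim a k"
    have e': "edges F' = {g f0}" using fg(2) e by (simp add: bij_betw_def)
    have "lab F' (g f0) = Prim a k" using fg(3) e l teq_prim1 by auto
    then have "top_occ Y [SMul (g f0)] (Prim a k)" unfolding top_occ_def Y'(1)
      using e' by (simp, metis occ.intros(1,4) insertI1)
    then obtain ps' e M where ps': "[SMul (g f0)] = ps' @ [SMul e]" "occ Y ps' (Times M)"
          "2 \<le> card (edges M)" using lo unfolding lonely_def by blast
    then have "ps' = []" by (cases ps') auto
    then have "M = F'" using ps'(2) Y'(1) by (auto elim: occ.cases)
    then show False using ps'(3) e' by simp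
  qed
  show ?thesis using A B C by blast
qed


lemma main:
  "HL H A \<Longrightarrow> A = Prim a k \<Longrightarrow> (\<forall>e\<in>edges H. CC a k (lab H e)) \<Longrightarrow> is_handle a k H"
proof (induction rule: HL.induct)
  case (iso H A H' A')
  obtain f g where fg: "bij_betw f (nodes H) (nodes H')" "bij_betw g (edges H) (edges H')"
    "\<forall>e\<in>edges H. att H' (g e) = map f (att H e) \<and> teq (lab H e) (lab H' (g e))"
    "ext H' = map f (ext H)" using iso.hyps(2) unfolding giso_def by blast
  have A: "A = Prim a k" using iso.hyps(3) iso.prems(1) teq_prim2 by blast
  have "\<forall>e\<in>edges H. CC a k (lab H e)"
  proof
    fix e assume e: "e \<in> edges H"
    then have "g e \<in> edges H'" using fg(2) bij_betwE by blast
    then have "CC a k (lab H' (g e))" using iso.prems(2) by blast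
    then show "CC a k (lab H e)" using fg(3) e teq_trans unfolding CC_def by blast
  qed
  then have h: "is_handle a k H" using iso.IH A by blast
  then obtain x where x: "edges H = {x}" "lab H x = Prim a k" "att H x = ext H"
     "nodes H = set (ext H)" "length (ext H) = k" "distinct (ext H)"
    unfolding is_handle_def by blast
  have "edges H' = {g x}" using fg(2) x(1) by (simp add: bij_betw_def)
  moreover have "lab H' (g x) = Prim a k" using fg(3) x teq_prim1 by auto
  moreover have "att H' (g x) = ext H'" using fg(3,4) x by auto
  moreover have "nodes H' = set (ext H')" using fg(1,4) x(4) by (simp add: bij_betw_def)
  moreover have "length (ext H') = k" using fg(4) x(5) by simp
  moreover have "distinct (ext H')" using fg(1,4) x(4,6) by (simp add: bij_betw_def distinct_map)
  ultimately show ?case unfolding is_handle_def by blast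
next
  case (ax a' k')
  then show ?case unfolding is_handle_def handle_def tp_type_def by simp
next
  case (div_l H A e N d0 D Hs G)
  let ?H1 = "repl H (\<lambda>x. if x = e then Some (map_hgraph the D) else None)"
  let ?H2 = "relab ?H1 (cp (Suc e) d0) (Div N D)"
  let ?s = "(\<lambda>x. if x \<in> cp (Suc e) ` (edges D - {d0}) then Some (Hs (snd (prod_decode x))) else None)"
  have G: "G = repl ?H2 ?s" by fact
  have "cp (Suc e) d0 \<in> edges ?H1" using repl_new[of e H "\<lambda>x. if x = e then Some (map_hgraph the D) else None" "map_hgraph the D" d0] div_l.hyps(2,4) by (simp add: hgraph.map_sel)
  then have "cp (Suc e) d0 \<in> edges ?H2 \<and> lab ?H2 (cp (Suc e) d0) = Div N D" unfolding relab_def by simp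
  then have "cp 0 (cp (Suc e) d0) \<in> edges G \<and> lab G (cp 0 (cp (Suc e) d0)) = Div N D"
    unfolding G using repl_keep[of "cp (Suc e) d0" ?H2 ?s] by (simp add: image_iff)
  then have "CC a k (Div N D)" using div_l.prems(2) by metis
  then have cn: "CC a k N" "N \<noteq> Prim a k" using L2 by blast+
  have "\<forall>x\<in>edges H. CC a k (lab H x)"
  proof
    fix x assume x: "x \<in> edges H"
    show "CC a k (lab H x)"
    proof (cases "x = e")
      case True then show ?thesis using cn div_l.hyps(3) by simp
    next
      case False
      then have "cp 0 x \<in> edges ?H1 \<and> lab ?H1 (cp 0 x) = lab H x"
        using repl_keep[of x H "\<lambda>x. if x = e then Some (map_hgraph the D) else None"] x by simp
      then have "cp 0 x \<in> edges ?H2 \<and> lab ?H2 (cp 0 x) = lab H x" unfolding relab_def by simp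
      then have "cp 0 (cp 0 x) \<in> edges G \<and> lab G (cp 0 (cp 0 x)) = lab H x"
        unfolding G using repl_keep[of "cp 0 x" ?H2 ?s] by (simp add: image_iff)
      then show ?thesis using div_l.prems(2) by metis
    qed
  qed
  then have "is_handle a k H" using div_l.IH div_l.prems(1) by blast
  then have "lab H e = Prim a k" using div_l.hyps(2) unfolding is_handle_def by auto
  then show ?case using cn div_l.hyps(3) by simp
next
  case (div_r D d0 F N)
  show ?case using div_r.prems(1) by simp
next
  case (times_l G e F A)
  let ?R = "repl G (\<lambda>x. if x = e then Some F else None)"
  have ct: "CC a k (Times F)" using times_l.prems(2) times_l.hyps(2,3) by metis
  note L = L3[OF ct]
  have "\<forall>z\<in>edges ?R. CC a k (lab ?R z)"
  proof
    fix z assume "z \<in> edges ?R"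
    from repl_edges[OF this] show "CC a k (lab ?R z)"
      using L times_l.prems(2) by (auto split: if_splits)
  qed
  then have h: "is_handle a k ?R" using times_l.IH times_l.prems(1) by blast
  then obtain x where x: "edges ?R = {x}" "lab ?R x = Prim a k"
     "nodes ?R = set (ext ?R)"
    unfolding is_handle_def by blast
  have "wf_tp (Times F)" using times_l.hyps(2-4) unfolding seq_ok_def wfg_t_def by metis
  then have wF: "wfg F" by (cases rule: wf_tp.cases) auto
  show ?case
  proof (cases "edges F = {}")
    case True
    then obtain v where v: "v \<in> nodes F" "v \<notin> set (ext F)" using L wF by blast
    have "cp (Suc e) v \<in> nodes ?R" using repl_node[of e G "\<lambda>x. if x = e then Some F else None" F v] v times_l.hyps(2) by simp
    then show ?thesis using x(3) by auto
  next
    case False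
    then obtain f0 where f0: "f0 \<in> edges F" by blast
    have r0: "cp (Suc e) f0 \<in> edges ?R \<and> lab ?R (cp (Suc e) f0) = lab F f0"
      using repl_new[of e G "\<lambda>x. if x = e then Some F else None" F f0] f0 times_l.hyps(2) by simp
    have "edges F = {f0}"
    proof
      show "edges F \<subseteq> {f0}"
      proof
        fix f1 assume "f1 \<in> edges F"
        then have "cp (Suc e) f1 \<in> edges ?R" using repl_new[of e G "\<lambda>x. if x = e then Some F else None" F f1] times_l.hyps(2) by simp
        then show "f1 \<in> {f0}" using r0 x(1) by auto
      qed
    qed (use f0 in auto)
    moreover have "lab F f0 = Prim a k" using r0 x by auto
    ultimately show ?thesis using L by blast
  qed
next
  case (times_r M Hs G)
  show ?case using times_r.prems(1) by simp
qed

lemma handle_giso: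
  assumes "is_handle a k H"
  shows "giso (=) H (handle (Prim a k))"
proof -
  obtain x where x: "edges H = {x}" "lab H x = Prim a k" "att H x = ext H"
     "nodes H = set (ext H)" "length (ext H) = k" "distinct (ext H)"
    using assms unfolding is_handle_def by blast
  have b: "bij_betw (nth (ext H)) {..<k} (nodes H)" using x bij_betw_nth by blast
  define f where "f = inv_into {..<k} (nth (ext H))"
  have bf: "bij_betw f (nodes H) {0..<k}" unfolding f_def using b bij_betw_inv_into
    by (metis atLeast0LessThan)
  have mf: "map f (ext H) = [0..<k]"
  proof (rule nth_equalityI)
    show "length (map f (ext H)) = length [0..<k]" using x by simp
    fix i assume "i < length (map f (ext H))"
    then have i: "i < k" using x by simp
    have "f (ext H ! i) = i" unfolding f_def
      using b i by (simp add: bij_betw_def inv_into_f_f)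
    then show "map f (ext H) ! i = [0..<k] ! i" using i x by simp
  qed
  show ?thesis unfolding giso_def handle_def tp_type_def
    apply (rule exI[of _ f], rule exI[of _ "\<lambda>_. 0"])
    using bf mf x by (simp add: bij_betw_def)
qed

theorem corollary1:
  fixes a k :: nat and \<T> :: "tp set" and H :: "tp hgraph"
  assumes "\<forall>T\<in>\<T>. wf_tp T"
    and "\<forall>T\<in>\<T>. \<forall>B. subtype B T \<longrightarrow> \<not> skeleton B"
    and "\<forall>T\<in>\<T>. lonely (Prim a k) T"
    and "\<forall>e\<in>edges H. lab H e \<in> \<T> \<union> {Prim a k}"
    and "HL H (Prim a k)"
  shows "giso (=) H (handle (Prim a k))"
proof -
  have "\<forall>e\<in>edges H. CC a k (lab H e)"
    using assms(2-4) teq_refl unfolding CC_def good'_def by blast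
  then show ?thesis using main[OF assms(5)] handle_giso by blast
qed

end
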